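(* The scalar equation $x'=-x-x^2-\tfrac14=-\bigl(x+\tfrac12\bigr)^2$ does not have the conditional Lipschitz shadowing property in $[-\tfrac12,\tfrac12]$ (and hence not in $[-\tfrac12,\infty)$), whereas it has the conditional Lipschitz shadowing property in $[-\rho,\rho]$ for every $\rho\in(0,\tfrac12)$.
   Context: For continuous $g\colon[0,\infty)\times\mathbb R\to\mathbb R$ and $\tau\in(0,\infty]$, a pseudosolution of $x'=g(t,x)$ on $[0,\tau)$ is a $C^1$ map $y\colon[0,\tau)\to\mathbb R$ with $\sigma_y:=\sup_{0\le t<\tau}|y'(t)-g(t,y(t))|<\infty$. The equation has the conditional Lipschitz shadowing property in $H\neq\emptyset$ if there exist $\varepsilon_0,\kappa>0$ such that whenever $0<\varepsilon\le\varepsilon_0$ and $y$ is a pseudosolution on $[0,\tau)$ ($\tau\in(0,\infty]$) with $\sigma_y\le\varepsilon$ and $y(t)\in H$ for all $t\in[0,\tau)$, there is a solution $x$ of the equation defined on $[0,\tau)$ with $\sup_{0\le t<\tau}|x(t)-y(t)|\le\kappa\varepsilon$. *)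

theory Defs
  imports "HOL-Analysis.Analysis" "HOL-Library.Extended_Real"
begin

definition dom_int :: "ereal \<Rightarrow> real set" where
  "dom_int tau = {t. 0 \<le> t \<and> ereal t < tau}"

definition C1_on_int :: "ereal \<Rightarrow> (real \<Rightarrow> real) \<Rightarrow> (real \<Rightarrow> real) \<Rightarrow> bool" where
  "C1_on_int tau y y' \<longleftrightarrow>
     (\<forall>t\<in>dom_int tau. (y has_real_derivative y' t) (at t within dom_int tau)) \<and>
     continuous_on (dom_int tau) y'"

definition pseudosolution :: "(real \<Rightarrow> real \<Rightarrow> real) \<Rightarrow> ereal \<Rightarrow> (real \<Rightarrow> real) \<Rightarrow> (real \<Rightarrow> real) \<Rightarrow> bool" where
  "pseudosolution g tau y y' \<longleftrightarrow> C1_on_int tau y y' \<and>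
     bdd_above ((\<lambda>t. \<bar>y' t - g t (y t)\<bar>) ` dom_int tau)"

definition sigma :: "(real \<Rightarrow> real \<Rightarrow> real) \<Rightarrow> ereal \<Rightarrow> (real \<Rightarrow> real) \<Rightarrow> (real \<Rightarrow> real) \<Rightarrow> real" where
  "sigma g tau y y' = (SUP t\<in>dom_int tau. \<bar>y' t - g t (y t)\<bar>)"

definition is_solution :: "(real \<Rightarrow> real \<Rightarrow> real) \<Rightarrow> ereal \<Rightarrow> (real \<Rightarrow> real) \<Rightarrow> bool" where
  "is_solution g tau x \<longleftrightarrow>
     (\<forall>t\<in>dom_int tau. (x has_real_derivative g t (x t)) (at t within dom_int tau))"

definition cond_lip_shadowing :: "(real \<Rightarrow> real \<Rightarrow> real) \<Rightarrow> real set \<Rightarrow> bool" where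
  "cond_lip_shadowing g H \<longleftrightarrow> H \<noteq> {} \<and>
     (\<exists>eps0>0. \<exists>kappa>0. \<forall>eps tau y y'.
        0 < eps \<and> eps \<le> eps0 \<and> 0 < tau \<and>
        pseudosolution g tau y y' \<and> sigma g tau y y' \<le> eps \<and>
        (\<forall>t\<in>dom_int tau. y t \<in> H)
        \<longrightarrow> (\<exists>x. is_solution g tau x \<and>
               (\<forall>t\<in>dom_int tau. \<bar>x t - y t\<bar> \<le> kappa * eps)))"

end

theory Submission
  imports Defs
begin

lemma dom_interior:
  assumes "0 < t" "ereal t < tau"
  shows "at t within dom_int tau = at t"
proof -
  obtain z where z: "t < z" "ereal z < tau" using ereal_dense2[OF assms(2)] by auto
  have sub: "{0<..<z} \<subseteq> dom_int tau"
  proof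
    fix s assume "s \<in> {0<..<z}"
    then have "0 \<le> s" "ereal s < ereal z" by auto
    moreover have "ereal s < tau" using calculation(2) z(2) by (rule order.strict_trans)
    ultimately show "s \<in> dom_int tau" unfolding dom_int_def by auto
  qed
  have "t \<in> interior (dom_int tau)"
    using interior_maximal[OF sub] assms(1) z(1) by auto
  then show ?thesis by (rule at_within_interior)
qed

lemma dom_cont:
  assumes "\<forall>t\<in>dom_int tau. (f has_real_derivative f' t) (at t within dom_int tau)"
  shows "continuous_on (dom_int tau) f"
  using assms DERIV_continuous continuous_on_eq_continuous_within by blast

lemma barrier:
  fixes w :: "real \<Rightarrow> real"
  assumes T: "T \<in> dom_int tau"
    and der: "\<forall>t\<in>dom_int tau. (w has_real_derivative w' t) (at t within dom_int tau)"
    and w0: "w 0 \<le> M"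
    and neg: "\<forall>t\<in>dom_int tau. w t > M \<longrightarrow> w' t < 0"
  shows "w T \<le> M"
proof (rule ccontr)
  assume "\<not> w T \<le> M"
  then have wT: "w T > M" by simp
  have T0: "0 \<le> T" "ereal T < tau" using T unfolding dom_int_def by auto
  have sub: "{0..T} \<subseteq> dom_int tau"
  proof
    fix s assume "s \<in> {0..T}"
    then have "0 \<le> s" "ereal s \<le> ereal T" by auto
    moreover have "ereal s < tau" using calculation(2) T0(2) by (rule order.strict_trans1)
    ultimately show "s \<in> dom_int tau" unfolding dom_int_def by auto
  qed
  have "continuous_on {0..T} w" using continuous_on_subset[OF dom_cont[OF der] sub] .
  then obtain m where m: "m \<in> {0..T}" "\<forall>y\<in>{0..T}. w y \<le> w m"
    using continuous_attains_sup[of "{0..T}" w] T0 by auto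
  have wm: "w m > M" using m(2) T0 wT by force
  have m0: "m > 0" using wm w0 m(1) by (cases "m = 0") auto
  have mdom: "m \<in> dom_int tau" using m(1) sub by auto
  have mlt: "ereal m < tau" using mdom unfolding dom_int_def by auto
  have "(w has_real_derivative w' m) (at m)"
    using der mdom dom_interior[OF m0 mlt] by force
  moreover have "w' m < 0" using neg mdom wm by auto
  ultimately obtain d where d: "d > 0" "\<forall>h>0. h < d \<longrightarrow> w m < w (m - h)"
    using DERIV_neg_dec_left by blast
  define h where "h = min (d/2) m"
  have "h > 0" "h < d" "h \<le> m" using d m0 unfolding h_def by auto
  then have "w m < w (m - h)" "m - h \<in> {0..T}" using d m(1) by auto
  then show False using m(2) by fastforce
qed

lemma sol_deriv:
  fixes u0 t :: real
  assumes "1 + u0 * t \<noteq> 0"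
  shows "((\<lambda>t. u0 / (1 + u0 * t) - 1/2) has_real_derivative
          (- (u0 / (1 + u0 * t) - 1/2) - (u0 / (1 + u0 * t) - 1/2)^2 - 1/4)) (at t)"
proof -
  have "((\<lambda>t. u0 / (1 + u0 * t) - 1/2) has_real_derivative
          - (u0 * u0) / (1 + u0 * t)^2) (at t)"
    using assms by (auto intro!: derivative_eq_intros simp: power2_eq_square)
  moreover have "- (u0 * u0) / (1 + u0 * t)^2 =
      (- (u0 / (1 + u0 * t) - 1/2) - (u0 / (1 + u0 * t) - 1/2)^2 - 1/4)"
  proof -
    have e: "(- (v - 1/2) - (v - 1/2)^2 - 1/4) = - (v^2)" for v :: real
      by (simp add: algebra_simps power2_eq_square)
    have "(- (u0 / (1 + u0 * t) - 1/2) - (u0 / (1 + u0 * t) - 1/2)^2 - 1/4) = - ((u0 / (1 + u0 * t))^2)"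
      by (rule e)
    also have "\<dots> = - (u0 * u0) / (1 + u0 * t)^2" by (simp add: power_divide power2_eq_square)
    finally show ?thesis by simp
  qed
  ultimately show ?thesis by simp
qed

lemma part3:
  assumes rho: "0 < rho" "rho < 1/2"
  shows "cond_lip_shadowing (\<lambda>(t::real) (x::real). - x - x^2 - 1/4) {-rho..rho}"
proof -
  define g where "g = (\<lambda>(t::real) (x::real). - x - x^2 - 1/4)"
  define a where "a = 1/2 - rho"
  have a0: "a > 0" using rho unfolding a_def by simp
  have "\<forall>eps tau y y'.
        0 < eps \<and> eps \<le> 1 \<and> 0 < tau \<and>
        pseudosolution g tau y y' \<and> sigma g tau y y' \<le> eps \<and>
        (\<forall>t\<in>dom_int tau. y t \<in> {-rho..rho})
        \<longrightarrow> (\<exists>x. is_solution g tau x \<and>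
               (\<forall>t\<in>dom_int tau. \<bar>x t - y t\<bar> \<le> (1/a) * eps))"
  proof (intro allI impI)
    fix eps tau y y'
    assume A: "0 < eps \<and> eps \<le> 1 \<and> 0 < tau \<and>
        pseudosolution g tau y y' \<and> sigma g tau y y' \<le> eps \<and>
        (\<forall>t\<in>dom_int tau. y t \<in> {-rho..rho})"
    let ?D = "dom_int tau"
    have eps: "0 < eps" using A by simp
    have dom0: "0 \<in> ?D" using A unfolding dom_int_def by (simp add: zero_ereal_def)
    have yH: "\<And>t. t \<in> ?D \<Longrightarrow> a \<le> y t + 1/2" using A unfolding a_def by force
    have yder: "\<forall>t\<in>?D. (y has_real_derivative y' t) (at t within ?D)"
      using A unfolding pseudosolution_def C1_on_int_def by blast
    have err: "\<And>t. t \<in> ?D \<Longrightarrow> \<bar>y' t - g t (y t)\<bar> \<le> eps"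
    proof -
      fix t assume t: "t \<in> ?D"
      have "\<bar>y' t - g t (y t)\<bar> \<le> sigma g tau y y'"
        unfolding sigma_def
        by (rule cSUP_upper[OF t]) (use A in \<open>simp add: pseudosolution_def\<close>)
      then show "\<bar>y' t - g t (y t)\<bar> \<le> eps" using A by simp
    qed
    define u0 where "u0 = y 0 + 1/2"
    have u0: "u0 \<ge> a" using yH[OF dom0] unfolding u0_def by simp
    define x where "x = (\<lambda>t. u0 / (1 + u0 * t) - 1/2)"
    have pos: "\<And>t. t \<in> ?D \<Longrightarrow> 1 + u0 * t > 0"
      using u0 a0 unfolding dom_int_def by (simp add: add_pos_nonneg)
    have upos: "\<And>t. t \<in> ?D \<Longrightarrow> x t + 1/2 > 0"
      using pos u0 a0 unfolding x_def by simp
    have xder: "\<forall>t\<in>?D. (x has_real_derivative g t (x t)) (at t within ?D)"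
    proof
      fix t assume "t \<in> ?D"
      then have "1 + u0 * t \<noteq> 0" using pos by force
      from has_field_derivative_at_within[OF sol_deriv[OF this]]
      show "(x has_real_derivative g t (x t)) (at t within ?D)"
        unfolding x_def g_def by simp
    qed
    define w' where "w' = (\<lambda>t. g t (x t) - y' t)"
    have wder: "\<forall>t\<in>?D. ((\<lambda>t. x t - y t) has_real_derivative w' t) (at t within ?D)"
      using xder yder unfolding w'_def by (auto intro!: derivative_eq_intros)
    have wder2: "\<forall>t\<in>?D. ((\<lambda>t. - (x t - y t)) has_real_derivative - w' t) (at t within ?D)"
    proof
      fix t assume "t \<in> ?D"
      then have "((\<lambda>t. x t - y t) has_real_derivative w' t) (at t within ?D)" using wder by blast
      from DERIV_minus[OF this] show "((\<lambda>t. - (x t - y t)) has_real_derivative - w' t) (at t within ?D)" .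
    qed
    have key: "w' t = - ((x t + 1/2) + (y t + 1/2)) * (x t - y t) - (y' t - g t (y t))" for t
      unfolding w'_def g_def by (simp add: algebra_simps power2_eq_square)
    have x0: "x 0 = y 0" unfolding x_def u0_def by simp
    have up: "x t - y t \<le> eps / a" if t: "t \<in> ?D" for t
    proof (rule barrier[OF t wder])
      show "x 0 - y 0 \<le> eps / a" using x0 eps a0 by simp
      show "\<forall>t\<in>?D. eps / a < x t - y t \<longrightarrow> w' t < 0"
      proof (intro ballI impI)
        fix t assume t: "t \<in> ?D" and gt: "eps / a < x t - y t"
        have wp: "x t - y t > 0" using gt eps a0 by (smt (verit) divide_pos_pos)
        have "a * (x t - y t) > eps" using gt a0 by (simp add: field_simps)
        moreover have "((x t + 1/2) + (y t + 1/2)) * (x t - y t) \<ge> a * (x t - y t)"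
          using upos[OF t] yH[OF t] wp by (intro mult_right_mono) auto
        moreover have "y' t - g t (y t) \<ge> - eps" using err[OF t] by linarith
        ultimately show "w' t < 0" unfolding key by linarith
      qed
    qed
    have lo: "- (x t - y t) \<le> eps / a" if t: "t \<in> ?D" for t
    proof (rule barrier[OF t wder2])
      show "- (x 0 - y 0) \<le> eps / a" using x0 eps a0 by simp
      show "\<forall>t\<in>?D. eps / a < - (x t - y t) \<longrightarrow> - w' t < 0"
      proof (intro ballI impI)
        fix t assume t: "t \<in> ?D" and gt: "eps / a < - (x t - y t)"
        have wp: "- (x t - y t) > 0" using gt eps a0 by (smt (verit) divide_pos_pos)
        have "a * (- (x t - y t)) > eps" using gt a0 by (simp add: field_simps)
        moreover have "((x t + 1/2) + (y t + 1/2)) * (- (x t - y t)) \<ge> a * (- (x t - y t))"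
          using upos[OF t] yH[OF t] wp by (intro mult_right_mono) auto
        moreover have "y' t - g t (y t) \<le> eps" using err[OF t] by linarith
        ultimately show "- w' t < 0" unfolding key by (simp add: algebra_simps)
      qed
    qed
    show "\<exists>x. is_solution g tau x \<and> (\<forall>t\<in>?D. \<bar>x t - y t\<bar> \<le> (1/a) * eps)"
    proof (intro exI[of _ x] conjI ballI)
      show "is_solution g tau x" using xder unfolding is_solution_def by blast
      fix t assume t: "t \<in> ?D"
      show "\<bar>x t - y t\<bar> \<le> (1/a) * eps" using up[OF t] lo[OF t] by (simp add: abs_le_iff)
    qed
  qed
  then have "\<exists>eps0>0. \<exists>kappa>0. \<forall>eps tau y y'.
        0 < eps \<and> eps \<le> eps0 \<and> 0 < tau \<and>
        pseudosolution g tau y y' \<and> sigma g tau y y' \<le> eps \<and>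
        (\<forall>t\<in>dom_int tau. y t \<in> {-rho..rho})
        \<longrightarrow> (\<exists>x. is_solution g tau x \<and>
               (\<forall>t\<in>dom_int tau. \<bar>x t - y t\<bar> \<le> kappa * eps))"
    using a0 by (intro exI[of _ "1::real"] conjI exI[of _ "1/a"]) simp_all
  moreover have "{-rho..rho} \<noteq> {}" using rho by simp
  ultimately show ?thesis unfolding cond_lip_shadowing_def g_def by blast
qed

lemma part1:
  "\<not> cond_lip_shadowing (\<lambda>(t::real) (x::real). - x - x^2 - 1/4) {-1/2..1/2}"
proof
  define g where "g = (\<lambda>(t::real) (x::real). - x - x^2 - 1/4)"
  assume "cond_lip_shadowing (\<lambda>(t::real) (x::real). - x - x^2 - 1/4) {-1/2..1/2}"
  then obtain eps0 kappa where e0: "eps0 > 0" and k0: "kappa > 0" and P: "\<forall>eps tau y y'.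
        0 < eps \<and> eps \<le> eps0 \<and> 0 < tau \<and>
        pseudosolution g tau y y' \<and> sigma g tau y y' \<le> eps \<and>
        (\<forall>t\<in>dom_int tau. y t \<in> {-1/2..1/2})
        \<longrightarrow> (\<exists>x. is_solution g tau x \<and>
               (\<forall>t\<in>dom_int tau. \<bar>x t - y t\<bar> \<le> kappa * eps))"
    unfolding cond_lip_shadowing_def g_def by blast
  define d where "d = min (min 1 eps0) (1/(2*kappa))"
  have d0: "d > 0" "d \<le> 1" "d \<le> eps0" "d \<le> 1/(2*kappa)" using e0 k0 unfolding d_def by auto
  have kd: "kappa * d \<le> 1/2" using d0(4) k0 by (simp add: field_simps)
  have dd: "d * d \<le> d" using d0 by (simp add: mult_le_cancel_left1)
  have kdd: "kappa * (d * d) \<le> d / 2" using mult_right_mono[OF kd, of d] d0 by (simp add: algebra_simps)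
  define D where "D = dom_int PInfty"
  have Dd: "D = {t. 0 \<le> t}" unfolding D_def dom_int_def by auto
  have D0: "0 \<in> D" "D \<noteq> {}" unfolding Dd by auto
  define y where "y = (\<lambda>t::real. d - 1/2)"
  define y' where "y' = (\<lambda>t::real. 0::real)"
  have gval: "(\<lambda>t. \<bar>y' t - g t (y t)\<bar>) = (\<lambda>t. d * d)"
    unfolding y_def y'_def g_def by (rule ext) (simp add: algebra_simps power2_eq_square)
  have ps: "pseudosolution g PInfty y y'"
    unfolding pseudosolution_def C1_on_int_def gval
    by (auto simp: y_def y'_def intro: bdd_aboveI)
  have sg: "sigma g PInfty y y' \<le> d * d"
    unfolding sigma_def gval D_def[symmetric] using D0 by simp
  have yH: "\<forall>t\<in>dom_int PInfty. y t \<in> {-1/2..1/2}" using d0 unfolding y_def by auto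
  have "0 < d * d" using d0 by simp
  then obtain x where xs: "is_solution g PInfty x"
    and xb: "\<forall>t\<in>D. \<bar>x t - y t\<bar> \<le> kappa * (d * d)"
    using P[rule_format, of "d*d" PInfty y y'] ps sg yH dd d0 unfolding D_def by force
  have xb2: "\<And>t. t \<in> D \<Longrightarrow> d/2 - 1/2 \<le> x t \<and> x t \<le> d/2 + d - 1/2"
    using xb kdd unfolding y_def by (force simp: abs_le_iff)
  define T where "T = 16 / d"
  have TD: "T \<in> D" using d0 unfolding T_def Dd by simp
  have hder: "\<forall>t\<in>D. ((\<lambda>t. x t + (d*d/8) * t) has_real_derivative g t (x t) + d*d/8) (at t within D)"
    using xs unfolding is_solution_def D_def by (auto intro!: derivative_eq_intros)
  have "x T + (d*d/8) * T \<le> x 0 + (d*d/8) * 0"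
  proof (rule barrier[OF TD[unfolded D_def] hder[unfolded D_def]])
    show "x 0 + d * d / 8 * 0 \<le> x 0 + d * d / 8 * 0" by simp
    show "\<forall>t\<in>dom_int PInfty. x 0 + d * d / 8 * 0 < x t + d * d / 8 * t \<longrightarrow> g t (x t) + d * d / 8 < 0"
    proof (intro ballI impI)
      fix t assume t: "t \<in> dom_int PInfty"
      have u: "x t + 1/2 \<ge> d/2" using xb2[of t] t unfolding D_def by auto
      have "(d/2) * (d/2) \<le> (x t + 1/2) * (x t + 1/2)"
        using u d0 by (intro mult_mono) auto
      moreover have "g t (x t) = - ((x t + 1/2) * (x t + 1/2))"
        unfolding g_def by (simp add: algebra_simps power2_eq_square)
      ultimately show "g t (x t) + d * d / 8 < 0" using d0 by (simp add: field_simps) (smt (verit) mult_pos_pos)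
    qed
  qed
  moreover have "(d*d/8) * T = 2 * d" using d0 unfolding T_def by (simp add: field_simps)
  ultimately have "x T + 2 * d \<le> x 0" by linarith
  moreover have "x 0 \<le> d/2 + d - 1/2" "d/2 - 1/2 \<le> x T" using xb2[OF D0(1)] xb2[OF TD] by auto
  ultimately show False using d0 by simp
qed

theorem mainTheorem6:
  defines "g \<equiv> (\<lambda>(t::real) (x::real). - x - x^2 - 1/4)"
  shows "\<not> cond_lip_shadowing g {-1/2..1/2} \<and>
         \<not> cond_lip_shadowing g {-1/2..} \<and>
         (\<forall>rho::real. 0 < rho \<and> rho < 1/2 \<longrightarrow> cond_lip_shadowing g {-rho..rho})"
proof (intro conjI allI impI)
  show "\<not> cond_lip_shadowing g {-1/2..1/2}" unfolding g_def by (rule part1)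
  show "\<not> cond_lip_shadowing g {-1/2..}"
  proof
    assume "cond_lip_shadowing g {-1/2..}"
    then obtain eps0 kappa where e: "eps0 > 0" "kappa > 0" and P: "\<forall>eps tau y y'.
        0 < eps \<and> eps \<le> eps0 \<and> 0 < tau \<and>
        pseudosolution g tau y y' \<and> sigma g tau y y' \<le> eps \<and>
        (\<forall>t\<in>dom_int tau. y t \<in> {-1/2..})
        \<longrightarrow> (\<exists>x. is_solution g tau x \<and>
               (\<forall>t\<in>dom_int tau. \<bar>x t - y t\<bar> \<le> kappa * eps))"
      unfolding cond_lip_shadowing_def by blast
    have "\<forall>eps tau y y'.
        0 < eps \<and> eps \<le> eps0 \<and> 0 < tau \<and>
        pseudosolution g tau y y' \<and> sigma g tau y y' \<le> eps \<and>
        (\<forall>t\<in>dom_int tau. y t \<in> {-1/2..1/2})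
        \<longrightarrow> (\<exists>x. is_solution g tau x \<and>
               (\<forall>t\<in>dom_int tau. \<bar>x t - y t\<bar> \<le> kappa * eps))"
    proof (intro allI impI)
      fix eps tau y y' assume A: "0 < eps \<and> eps \<le> eps0 \<and> 0 < tau \<and>
        pseudosolution g tau y y' \<and> sigma g tau y y' \<le> eps \<and>
        (\<forall>t\<in>dom_int tau. y t \<in> {-1/2..1/2::real})"
      then have "(\<forall>t\<in>dom_int tau. y t \<in> {-1/2..})" by auto
      then show "\<exists>x. is_solution g tau x \<and>
               (\<forall>t\<in>dom_int tau. \<bar>x t - y t\<bar> \<le> kappa * eps)"
        using P A by blast
    qed
    then have "cond_lip_shadowing g {-1/2..1/2}"
      unfolding cond_lip_shadowing_def using e by auto
    then show False using part1 unfolding g_def by blast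
  qed
  fix rho :: real assume "0 < rho \<and> rho < 1/2"
  then show "cond_lip_shadowing g {-rho..rho}" unfolding g_def using part3 by blast
qed

end
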